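(* Let $1\le p<\infty$ and let $X=\ell_p(\mathbb Z_+)$ (real or complex). Let $\mathbf w=(w_n)_{n\ge1}$ be a bounded sequence of non-zero scalars and let $B_{\mathbf w}$ be the weighted backward shift on $X$. Then $B_{\mathbf w}$ admits a Borel probability measure $m$ on $X$ which is $B_{\mathbf w}$-invariant and different from the Dirac mass $\delta_0$ if and only if $\sum_{n=1}^\infty \frac{1}{|w_1\cdots w_n|^p}<\infty$.
   Context: $(e_n)_{n\ge0}$ is the canonical basis of $\ell_p(\mathbb Z_+)$. The weighted backward shift is defined by $B_{\mathbf w}e_0=0$ and $B_{\mathbf w}e_n=w_ne_{n-1}$ for $n\ge1$. A Borel probability measure $m$ is $B_{\mathbf w}$-invariant if $m(B_{\mathbf w}^{-1}(A))=m(A)$ for every Borel set $A\subseteq X$. *)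

theory Defs
  imports "HOL-Probability.Probability"
begin

definition lp :: "real \<Rightarrow> (nat \<Rightarrow> 'a::real_normed_vector) set" where
  "lp p = {x. summable (\<lambda>n. norm (x n) powr p)}"

definition lp_norm :: "real \<Rightarrow> (nat \<Rightarrow> 'a::real_normed_vector) \<Rightarrow> real" where
  "lp_norm p x = (\<Sum>n. norm (x n) powr p) powr (1 / p)"

definition lp_open :: "real \<Rightarrow> (nat \<Rightarrow> 'a::real_normed_vector) set \<Rightarrow> bool" where
  "lp_open p U \<longleftrightarrow> U \<subseteq> lp p \<and>
     (\<forall>x\<in>U. \<exists>e>0. \<forall>y\<in>lp p. lp_norm p (\<lambda>n. y n - x n) < e \<longrightarrow> y \<in> U)"

definition lp_borel :: "real \<Rightarrow> (nat \<Rightarrow> 'a::real_normed_vector) measure" where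
  "lp_borel p = sigma (lp p) {U. lp_open p U}"

text \<open>Weighted backward shift: (B_w x)_n = w_(n+1) x_(n+1); the weight w 0 is unused.\<close>
definition bshift :: "(nat \<Rightarrow> 'a::real_normed_field) \<Rightarrow> (nat \<Rightarrow> 'a) \<Rightarrow> (nat \<Rightarrow> 'a)" where
  "bshift w x = (\<lambda>n. w (Suc n) * x (Suc n))"

end

theory Submission
  imports Defs
begin

lemma space_lp_borel: "space (lp_borel p) = lp p"
  unfolding lp_borel_def by (rule space_measure_of) (auto simp: lp_open_def)

lemma sets_lp_borel_open: "lp_open p U \<Longrightarrow> U \<in> sets (lp_borel p)"
proof -
  have P: "Collect (lp_open p) \<subseteq> Pow (lp p)" by (auto simp: lp_open_def)
  show "lp_open p U \<Longrightarrow> U \<in> sets (lp_borel p)"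
    unfolding lp_borel_def by (subst sets_measure_of[OF P]) (auto intro: sigma_sets.Basic)
qed

lemma powr_le_sum_powr:
  fixes a b :: real assumes "0 \<le> a" "0 \<le> b" "0 < p"
  shows "(a + b) powr p \<le> 2 powr p * (a powr p + b powr p)"
proof -
  have "(a + b) powr p \<le> (2 * max a b) powr p"
    using assms by (intro powr_mono2) auto
  also have "\<dots> = 2 powr p * max a b powr p"
    using assms by (simp add: powr_mult)
  also have "max a b powr p \<le> a powr p + b powr p"
    using assms by (auto simp: max_def)
  finally show ?thesis by simp
qed

lemma lp_diff:
  fixes x y :: "nat \<Rightarrow> 'a::real_normed_vector"
  assumes "x \<in> lp p" "y \<in> lp p" "0 < p"
  shows "(\<lambda>n. y n - x n) \<in> lp p"
proof -
  have "summable (\<lambda>n. 2 powr p * (norm (y n) powr p + norm (x n) powr p))"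
    using assms by (intro summable_mult summable_add) (auto simp: lp_def)
  moreover have "norm (norm (y n - x n) powr p) \<le> 2 powr p * (norm (y n) powr p + norm (x n) powr p)" for n
  proof -
    have "norm (y n - x n) powr p \<le> (norm (y n) + norm (x n)) powr p"
      using assms by (intro powr_mono2) (auto intro: norm_triangle_ineq4)
    also have "\<dots> \<le> 2 powr p * (norm (y n) powr p + norm (x n) powr p)"
      using assms by (intro powr_le_sum_powr) auto
    finally show ?thesis by simp
  qed
  ultimately show ?thesis unfolding lp_def
    by (auto intro: summable_comparison_test'[where g="\<lambda>n. 2 powr p * (norm (y n) powr p + norm (x n) powr p)"])
qed

lemma coord_le:
  fixes z :: "nat \<Rightarrow> 'a::real_normed_vector"
  assumes "z \<in> lp p" "0 < p"
  shows "norm (z n) \<le> lp_norm p z"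
proof -
  have s: "summable (\<lambda>n. norm (z n) powr p)" using assms by (simp add: lp_def)
  have "norm (z n) powr p \<le> (\<Sum>n. norm (z n) powr p)"
    using sum_le_suminf[OF s, of "{n}"] by auto
  hence "(norm (z n) powr p) powr (1/p) \<le> (\<Sum>n. norm (z n) powr p) powr (1/p)"
    using assms by (intro powr_mono2) auto
  thus ?thesis using assms by (simp add: lp_norm_def powr_powr)
qed

lemma coord_measurable:
  assumes "0 < p"
  shows "(\<lambda>x. x n) \<in> borel_measurable (lp_borel p :: (nat \<Rightarrow> 'a::real_normed_vector) measure)"
proof (rule borel_measurableI)
  fix S :: "'a set" assume S: "open S"
  show "(\<lambda>x. x n) -` S \<inter> space (lp_borel p) \<in> sets (lp_borel p)"
    unfolding space_lp_borel
  proof (rule sets_lp_borel_open, unfold lp_open_def, safe)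
    fix x assume x: "x \<in> lp p" "x n \<in> S"
    then obtain e where e: "e > 0" "ball (x n) e \<subseteq> S" using S open_contains_ball by blast
    show "\<exists>e>0. \<forall>y\<in>lp p. lp_norm p (\<lambda>n. y n - x n) < e \<longrightarrow> y \<in> (\<lambda>x. x n) -` S \<inter> lp p"
    proof (intro exI[of _ e] conjI ballI impI)
      fix y assume y: "y \<in> lp p" "lp_norm p (\<lambda>n. y n - x n) < e"
      have "norm (y n - x n) \<le> lp_norm p (\<lambda>n. y n - x n)"
        using coord_le[OF lp_diff[OF x(1) y(1) assms] assms] by simp
      hence "y n \<in> ball (x n) e" using y by (simp add: dist_norm norm_minus_commute)
      thus "y \<in> (\<lambda>x. x n) -` S \<inter> lp p" using e y by auto
    qed (use e in auto)
  qed
qed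

lemma bshift_sum_le:
  fixes w z :: "nat \<Rightarrow> 'a::real_normed_field"
  assumes z: "z \<in> lp p" and p: "0 < p" and M: "0 < M" "\<forall>n\<ge>1. norm (w n) \<le> M"
  shows "summable (\<lambda>n. norm (w (Suc n) * z (Suc n)) powr p)"
    and "(\<Sum>n. norm (w (Suc n) * z (Suc n)) powr p) \<le> M powr p * (\<Sum>n. norm (z n) powr p)"
proof -
  have s: "summable (\<lambda>n. norm (z n) powr p)" using z by (simp add: lp_def)
  hence s1: "summable (\<lambda>n. norm (z (Suc n)) powr p)" by (subst summable_Suc_iff)
  have le: "norm (w (Suc n) * z (Suc n)) powr p \<le> M powr p * norm (z (Suc n)) powr p" for n
  proof -
    have "norm (w (Suc n) * z (Suc n)) powr p = norm (w (Suc n)) powr p * norm (z (Suc n)) powr p"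
      by (simp add: norm_mult powr_mult)
    also have "\<dots> \<le> M powr p * norm (z (Suc n)) powr p"
      using M p by (intro mult_right_mono powr_mono2) auto
    finally show ?thesis .
  qed
  show sm: "summable (\<lambda>n. norm (w (Suc n) * z (Suc n)) powr p)"
    by (rule summable_comparison_test'[where g="\<lambda>n. M powr p * norm (z (Suc n)) powr p"])
       (use le s1 in \<open>auto intro: summable_mult\<close>)
  have "(\<Sum>n. norm (w (Suc n) * z (Suc n)) powr p) \<le> (\<Sum>n. M powr p * norm (z (Suc n)) powr p)"
    by (rule suminf_le[OF le sm]) (use s1 in \<open>auto intro: summable_mult\<close>)
  also have "\<dots> = M powr p * (\<Sum>n. norm (z (Suc n)) powr p)"
    using s1 by (rule suminf_mult)
  also have "(\<Sum>n. norm (z (Suc n)) powr p) \<le> (\<Sum>n. norm (z n) powr p)"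
    using suminf_split_head[OF s] by simp
  hence "M powr p * (\<Sum>n. norm (z (Suc n)) powr p) \<le> M powr p * (\<Sum>n. norm (z n) powr p)"
    by (intro mult_left_mono) auto
  finally show "(\<Sum>n. norm (w (Suc n) * z (Suc n)) powr p) \<le> M powr p * (\<Sum>n. norm (z n) powr p)" .
qed

lemma bshift_lp:
  fixes w x :: "nat \<Rightarrow> 'a::real_normed_field"
  assumes "x \<in> lp p" "0 < p" "0 < M" "\<forall>n\<ge>1. norm (w n) \<le> M"
  shows "bshift w x \<in> lp p"
  using bshift_sum_le(1)[OF assms] by (simp add: lp_def bshift_def)

lemma bshift_measurable:
  fixes w :: "nat \<Rightarrow> 'a::real_normed_field"
  assumes p: "0 < p" and M: "0 < M" "\<forall>n\<ge>1. norm (w n) \<le> M"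
  shows "bshift w \<in> measurable (lp_borel p) (lp_borel p)"
proof -
  have P: "Collect (lp_open p) \<subseteq> Pow (lp p)" by (auto simp: lp_open_def)
  show ?thesis unfolding lp_borel_def
  proof (rule measurable_measure_of[OF P])
    show "bshift w \<in> space (sigma (lp p) (Collect (lp_open p))) \<rightarrow> lp p"
      using bshift_lp[OF _ p M] space_lp_borel[of p, unfolded lp_borel_def] by auto
    fix U :: "(nat \<Rightarrow> 'a) set" assume "U \<in> Collect (lp_open p)"
    hence U: "lp_open p U" by simp
    have "lp_open p (bshift w -` U \<inter> lp p)"
      unfolding lp_open_def
    proof safe
      fix x assume x: "x \<in> lp p" "bshift w x \<in> U"
      then obtain e where e: "e > 0" and eU: "\<forall>y\<in>lp p. lp_norm p (\<lambda>n. y n - bshift w x n) < e \<longrightarrow> y \<in> U"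
        using U unfolding lp_open_def by blast
      show "\<exists>e>0. \<forall>y\<in>lp p. lp_norm p (\<lambda>n. y n - x n) < e \<longrightarrow> y \<in> bshift w -` U \<inter> lp p"
      proof (intro exI[of _ "e / M"] conjI ballI impI)
        show "e / M > 0" using e M by auto
        fix y assume y: "y \<in> lp p" "lp_norm p (\<lambda>n. y n - x n) < e / M"
        define z where "z = (\<lambda>n. y n - x n)"
        have z: "z \<in> lp p" unfolding z_def by (rule lp_diff[OF x(1) y(1) p])
        have eq: "(\<lambda>n. bshift w y n - bshift w x n) = (\<lambda>n. w (Suc n) * z (Suc n))"
          by (auto simp: bshift_def z_def algebra_simps)
        have T0: "0 \<le> (\<Sum>n. norm (z n) powr p)"
          using z by (intro suminf_nonneg) (auto simp: lp_def)
        have S0: "0 \<le> (\<Sum>n. norm (w (Suc n) * z (Suc n)) powr p)"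
          using bshift_sum_le(1)[OF z p M] by (intro suminf_nonneg) auto
        have "lp_norm p (\<lambda>n. bshift w y n - bshift w x n) = (\<Sum>n. norm (w (Suc n) * z (Suc n)) powr p) powr (1/p)"
          by (simp add: eq lp_norm_def)
        also have "\<dots> \<le> (M powr p * (\<Sum>n. norm (z n) powr p)) powr (1/p)"
          using bshift_sum_le(2)[OF z p M] S0 p by (intro powr_mono2) auto
        also have "\<dots> = M * lp_norm p z"
          using M p T0 by (simp add: powr_mult powr_powr lp_norm_def)
        also have "\<dots> < M * (e / M)"
          using y(2) M unfolding z_def by (intro mult_strict_left_mono) auto
        also have "\<dots> = e" using M by simp
        finally have "lp_norm p (\<lambda>n. bshift w y n - bshift w x n) < e" .
        thus "y \<in> bshift w -` U \<inter> lp p"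
          using eU bshift_lp[OF y(1) p M] y(1) by auto
      qed
    qed
    thus "bshift w -` U \<inter> space (sigma (lp p) (Collect (lp_open p))) \<in> sets (sigma (lp p) (Collect (lp_open p)))"
      using sets_lp_borel_open[of p "bshift w -` U \<inter> lp p", unfolded lp_borel_def]
        space_lp_borel[of p, unfolded lp_borel_def] by metis
  qed
qed

lemma W_nz:
  fixes w :: "nat \<Rightarrow> 'a::real_normed_field"
  assumes "\<forall>n\<ge>1. w n \<noteq> 0"
  shows "(\<Prod>k=1..n. w k) \<noteq> 0"
  using assms by (auto simp: prod_zero_iff)

lemma backward_dir:
  fixes w :: "nat \<Rightarrow> 'a::real_normed_field"
  assumes p: "0 < p" and M: "0 < M" "\<forall>n\<ge>1. norm (w n) \<le> M"
    and nz: "\<forall>n\<ge>1. w n \<noteq> 0"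
    and sm: "summable (\<lambda>n. 1 / norm (\<Prod>k=1..Suc n. w k) powr p)"
  shows "\<exists>m :: (nat \<Rightarrow> 'a) measure. prob_space m \<and> sets m = sets (lp_borel p) \<and>
            (\<forall>A\<in>sets (lp_borel p). emeasure m (bshift w -` A \<inter> space m) = emeasure m A) \<and>
            m \<noteq> return (lp_borel p) (\<lambda>_. 0)"
proof -
  define x where "x = (\<lambda>n. inverse (\<Prod>k=1..n. w k))"
  have nx: "norm (x n) powr p = 1 / norm (\<Prod>k=1..n. w k) powr p" for n
    unfolding x_def by (simp add: norm_inverse inverse_powr divide_inverse)
  have xlp: "x \<in> lp p"
  proof -
    have "summable (\<lambda>n. (\<lambda>n. 1 / norm (\<Prod>k=1..n. w k) powr p) (Suc n))" using sm .
    hence "summable (\<lambda>n. 1 / norm (\<Prod>k=1..n. w k) powr p)" by (rule summable_Suc_iff[THEN iffD1])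
    thus ?thesis unfolding lp_def mem_Collect_eq nx .
  qed
  have fixpt: "bshift w x = x"
  proof
    fix n
    have "(\<Prod>k=1..Suc n. w k) = w (Suc n) * (\<Prod>k=1..n. w k)"
      by (simp add: prod.nat_ivl_Suc')
    thus "bshift w x n = x n"
      using W_nz[OF nz, of n] nz unfolding bshift_def x_def
      by (simp add: field_simps)
  qed
  define m where "m = return (lp_borel p) x"
  have xs: "x \<in> space (lp_borel p)" using xlp space_lp_borel by auto
  have z: "(\<lambda>_. 0) \<in> space (lp_borel p)" by (simp add: space_lp_borel lp_def)
  have bm: "bshift w \<in> measurable (lp_borel p) (lp_borel p)" by (rule bshift_measurable[OF p M])
  show ?thesis
  proof (intro exI[of _ m] conjI ballI)
    show "prob_space m" unfolding m_def using xs by (rule prob_space_return)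
    show "sets m = sets (lp_borel p)" by (simp add: m_def)
    fix A :: "(nat \<Rightarrow> 'a) set" assume A: "A \<in> sets (lp_borel p)"
    have pre: "bshift w -` A \<inter> space (lp_borel p) \<in> sets (lp_borel p)"
      using bm A by (rule measurable_sets)
    show "emeasure m (bshift w -` A \<inter> space m) = emeasure m A"
      using pre A xs fixpt by (simp add: m_def emeasure_return split: split_indicator)
  next
    define C where "C = (\<lambda>y. y 0) -` {x 0} \<inter> space (lp_borel p)"
    have C: "C \<in> sets (lp_borel p)" unfolding C_def
      by (rule measurable_sets[OF coord_measurable[OF p]]) auto
    have x0: "x 0 = 1" by (simp add: x_def)
    show "m \<noteq> return (lp_borel p) (\<lambda>_. 0)"
    proof
      assume "m = return (lp_borel p) (\<lambda>_. 0)"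
      hence "emeasure m C = emeasure (return (lp_borel p) (\<lambda>_. 0)) C" by simp
      thus False using C xs z x0 by (simp add: m_def emeasure_return C_def split: split_indicator)
    qed
  qed
qed


lemma forward_dir:
  fixes w :: "nat \<Rightarrow> 'a::real_normed_field" and m :: "(nat \<Rightarrow> 'a) measure"
  assumes p: "0 < p" and M: "0 < M" "\<forall>n\<ge>1. norm (w n) \<le> M"
    and nz: "\<forall>n\<ge>1. w n \<noteq> 0"
    and ps: "prob_space m" and sm: "sets m = sets (lp_borel p)"
    and inv: "\<forall>A\<in>sets (lp_borel p). emeasure m (bshift w -` A \<inter> space m) = emeasure m A"
    and ne: "m \<noteq> return (lp_borel p) (\<lambda>_. 0)"
  shows "summable (\<lambda>n. 1 / norm (\<Prod>k=1..Suc n. w k) powr p)"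
proof -
  interpret prob_space m by (rule ps)
  have sp: "space m = lp p" using sets_eq_imp_space_eq[OF sm] space_lp_borel by simp
  have coord_m[measurable]: "(\<lambda>x. x n) \<in> borel_measurable m" for n
    using coord_measurable[OF p, of n] measurable_cong_sets[OF sm refl] by blast
  have "\<exists>k. emeasure m {x\<in>space m. x k \<noteq> 0} \<noteq> 0"
  proof (rule ccontr)
    assume "\<not> ?thesis"
    hence null: "\<And>k. {x\<in>space m. x k \<noteq> 0} \<in> null_sets m" by auto
    have ae: "AE x in m. x k = 0" for k
      by (rule AE_I'[OF null[of k]]) auto
    have "AE x in m. \<forall>k. x k = 0" using ae by (simp add: AE_all_countable)
    hence AE0: "AE x in m. x = (\<lambda>_. 0)"
      by eventually_elim (auto simp: fun_eq_iff)
    have "m = return (lp_borel p) (\<lambda>_. 0)"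
    proof (rule measure_eqI)
      show "sets m = sets (return (lp_borel p) (\<lambda>_. 0))" using sm by simp
      fix A assume A: "A \<in> sets m"
      have z: "(\<lambda>_. 0) \<in> space m" by (simp add: sp lp_def)
      show "emeasure m A = emeasure (return (lp_borel p) (\<lambda>_. 0)) A"
      proof (cases "(\<lambda>_. 0) \<in> A")
        case True
        have "emeasure m A = emeasure m (space m)"
          by (rule emeasure_eq_AE) (use AE0 A True in \<open>auto elim!: AE_mp\<close>)
        thus ?thesis using True A sm emeasure_space_1 by (simp add: emeasure_return)
      next
        case False
        have "emeasure m A = emeasure m {}"
          by (rule emeasure_eq_AE) (use AE0 A False in \<open>auto elim!: AE_mp\<close>)
        thus ?thesis using False A sm by (simp add: emeasure_return)
      qed
    qed
    thus False using ne by simp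
  qed
  then obtain k where k: "emeasure m {x\<in>space m. x k \<noteq> 0} \<noteq> 0" by blast
  have "\<exists>j. emeasure m {x\<in>space m. 1 / Suc j < norm (x k)} \<noteq> 0"
  proof (rule ccontr)
    assume "\<not> ?thesis"
    hence "\<And>j. {x\<in>space m. 1 / Suc j < norm (x k)} \<in> null_sets m" by auto
    hence "(\<Union>j. {x\<in>space m. 1 / Suc j < norm (x k)}) \<in> null_sets m" by blast
    moreover have "{x\<in>space m. x k \<noteq> 0} \<subseteq> (\<Union>j. {x\<in>space m. 1 / Suc j < norm (x k)})"
    proof safe
      fix x assume "x \<in> space m" "x k \<noteq> 0"
      then obtain j where "inverse (real (Suc j)) < norm (x k)"
        using reals_Archimedean by (metis zero_less_norm_iff)
      thus "x \<in> (\<Union>j. {x\<in>space m. 1 / Suc j < norm (x k)})"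
        using \<open>x \<in> space m\<close> by (auto simp: inverse_eq_divide)
    qed
    moreover have "{x\<in>space m. x k \<noteq> 0} \<in> sets m" by measurable
    ultimately have "{x\<in>space m. x k \<noteq> 0} \<in> null_sets m"
      using null_sets_subset by blast
    thus False using k by auto
  qed
  then obtain j where j: "emeasure m {x\<in>space m. 1 / Suc j < norm (x k)} \<noteq> 0" by blast
  define eps :: real where "eps = 1 / Suc j"
  have eps: "eps > 0" by (simp add: eps_def)
  define W where "W = (\<lambda>n. \<Prod>i=1..n. w i)"
  have Wnz: "W n \<noteq> 0" for n unfolding W_def by (rule W_nz[OF nz])
  have WS: "W (Suc n) = w (Suc n) * W n" for n by (simp add: W_def prod.nat_ivl_Suc')
  define e where "e = eps * norm (W k)"
  have e: "e > 0" using eps Wnz by (simp add: e_def)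
  define D where "D = (\<lambda>n. {x\<in>space m. e < norm (W n * x n)})"
  have Wx_m[measurable]: "(\<lambda>x. W n * x n) \<in> borel_measurable m" for n
  proof -
    have "(\<lambda>y::'a. W n * y) \<in> borel_measurable borel"
      by (intro borel_measurable_continuous_onI continuous_intros)
    from measurable_compose[OF coord_m[of n] this] show ?thesis by simp
  qed
  have D_sets[measurable]: "D n \<in> sets m" for n unfolding D_def by measurable
  have cancel: "(eps * norm (W k) < norm (W k) * a) \<longleftrightarrow> eps < a" for a
    using Wnz[of k] by (simp add: mult.commute[of eps])
  have Dk: "D k = {x\<in>space m. eps < norm (x k)}"
    by (auto simp: D_def e_def norm_mult cancel)
  have DS: "bshift w -` D n \<inter> space m = D (Suc n)" for n
    using bshift_lp[OF _ p M] by (auto simp: D_def sp bshift_def WS mult.assoc mult.left_commute)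
  have Deq: "measure m (D (Suc n)) = measure m (D n)" for n
  proof -
    have "emeasure m (bshift w -` D n \<inter> space m) = emeasure m (D n)"
      using inv D_sets[of n] sm by auto
    thus ?thesis using DS by (simp add: measure_def)
  qed
  have Dall: "measure m (D n) = measure m (D 0)" for n
    by (induction n) (auto simp: Deq)
  define \<delta> where "\<delta> = measure m (D k)"
  have \<delta>: "\<delta> > 0"
    using j Dk unfolding eps_def by (simp add: \<delta>_def emeasure_eq_measure zero_less_measure_iff)
  have Dn: "measure m (D n) = \<delta>" for n using Dall[of n] Dall[of k] by (simp add: \<delta>_def)
  define S where "S = (\<lambda>x::nat\<Rightarrow>'a. \<Sum>n. norm (x n) powr p)"
  have S_m[measurable]: "S \<in> borel_measurable m"
  proof (rule borel_measurable_LIMSEQ_real[where u="\<lambda>i x. \<Sum>n<i. norm (x n) powr p"])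
    fix x assume "x \<in> space m"
    hence "summable (\<lambda>n. norm (x n) powr p)" by (simp add: sp lp_def)
    thus "(\<lambda>i. \<Sum>n<i. norm (x n) powr p) \<longlonglongrightarrow> S x"
      unfolding S_def by (rule summable_LIMSEQ)
  qed measurable
  define G where "G = (\<lambda>i::nat. {x\<in>space m. S x \<le> real i})"
  have G_sets[measurable]: "G i \<in> sets m" for i unfolding G_def by measurable
  have "incseq G" unfolding G_def incseq_def by auto
  moreover have "(\<Union>i. G i) = space m"
  proof safe
    fix x assume "x \<in> space m"
    moreover obtain i where "S x \<le> real i" using real_nat_ceiling_ge by blast
    ultimately show "x \<in> (\<Union>i. G i)" unfolding G_def by blast
  qed (auto simp: G_def)
  ultimately have lim: "(\<lambda>i. measure m (G i)) \<longlonglongrightarrow> 1"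
  proof -
    have "range G \<subseteq> events" using G_sets by auto
    thus ?thesis using finite_Lim_measure_incseq[of G] prob_space \<open>incseq G\<close> \<open>(\<Union>i. G i) = space m\<close> by auto
  qed
  have "\<forall>\<^sub>F i in sequentially. 1 - \<delta>/2 < measure m (G i)"
    by (rule order_tendstoD(1)[OF lim]) (use \<delta> in auto)
  then obtain i where i: "1 - \<delta>/2 < measure m (G i)" by (auto simp: eventually_sequentially)
  have DG: "\<delta>/2 \<le> measure m (D n \<inter> G i)" for n
  proof -
    have "\<delta> = measure m (D n)" by (simp add: Dn)
    also have "\<dots> \<le> measure m ((D n \<inter> G i) \<union> (space m - G i))"
      by (rule finite_measure_mono) (use sets.sets_into_space[OF D_sets[of n]] in auto)
    also have "\<dots> \<le> measure m (D n \<inter> G i) + measure m (space m - G i)"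
      by (rule measure_Un_le) auto
    also have "measure m (space m - G i) = 1 - measure m (G i)"
      by (rule prob_compl) simp
    finally show ?thesis using i by simp
  qed
  define c where "c = (\<lambda>n. (e / norm (W n)) powr p)"
  have c0: "0 \<le> c n" for n by (simp add: c_def)
  have cle: "c n \<le> norm (x n) powr p" if "x \<in> D n" for x n
  proof -
    have "e < norm (W n) * norm (x n)" using that by (simp add: D_def norm_mult)
    hence "e / norm (W n) < norm (x n)" using Wnz[of n] by (simp add: field_simps)
    thus ?thesis unfolding c_def using e p by (intro powr_mono2) auto
  qed
  have bound: "(\<Sum>n<N. c n) \<le> 2 * real i / \<delta>" for N
  proof -
    define f where "f = (\<lambda>x. \<Sum>n<N. c n * indicator (D n \<inter> G i) x :: real)"
    have fint: "integrable m f" unfolding f_def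
      by (rule Bochner_Integration.integrable_sum, rule integrable_mult_right, rule integrable_real_indicator) (auto simp: less_top[symmetric])
    have fle: "f x \<le> real i" if x: "x \<in> space m" for x
    proof (cases "x \<in> G i")
      case True
      have sx: "summable (\<lambda>n. norm (x n) powr p)" using x by (simp add: sp lp_def)
      have "f x \<le> (\<Sum>n<N. norm (x n) powr p)"
        unfolding f_def by (intro sum_mono) (auto simp: indicator_def cle)
      also have "\<dots> \<le> S x" unfolding S_def by (rule sum_le_suminf[OF sx]) auto
      also have "\<dots> \<le> real i" using True by (simp add: G_def)
      finally show ?thesis .
    next
      case False thus ?thesis by (simp add: f_def indicator_def)
    qed
    have "integral\<^sup>L m f \<le> integral\<^sup>L m (\<lambda>_. real i)"
      by (rule integral_mono[OF fint]) (auto simp: fle)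
    also have "\<dots> = real i" using prob_space by simp
    finally have I: "integral\<^sup>L m f \<le> real i" .
    have "integral\<^sup>L m f = (\<Sum>n<N. c n * measure m (D n \<inter> G i))"
      unfolding f_def
      by (subst Bochner_Integration.integral_sum) (auto intro!: integrable_mult_right integrable_real_indicator
          simp: Int_absorb2 sets.sets_into_space less_top[symmetric])
    moreover have "(\<Sum>n<N. c n * (\<delta>/2)) \<le> (\<Sum>n<N. c n * measure m (D n \<inter> G i))"
      by (intro sum_mono mult_left_mono DG c0)
    moreover have "(\<Sum>n<N. c n) * (\<delta>/2) = (\<Sum>n<N. c n * (\<delta>/2))"
      by (rule sum_distrib_right)
    ultimately have "(\<Sum>n<N. c n) * (\<delta>/2) \<le> real i"
      using I by linarith
    thus ?thesis using \<delta> by (simp add: field_simps)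
  qed
  have "summable c" by (rule summableI_nonneg_bounded[OF c0 bound])
  hence "summable (\<lambda>n. c (Suc n))" by (subst summable_Suc_iff)
  hence "summable (\<lambda>n. c (Suc n) / e powr p)" by (rule summable_divide)
  moreover have "c (Suc n) / e powr p = 1 / norm (\<Prod>k=1..Suc n. w k) powr p" for n
    using e by (simp add: c_def W_def powr_divide)
  ultimately show ?thesis by simp
qed

theorem proposition2p1:
  fixes p :: real and w :: "nat \<Rightarrow> 'a::{real_normed_field, banach}"
  assumes "1 \<le> p"
    and "bounded (w ` {1..})"
    and "\<forall>n\<ge>1. w n \<noteq> 0"
  shows "(\<exists>m :: (nat \<Rightarrow> 'a) measure. prob_space m \<and> sets m = sets (lp_borel p) \<and>
            (\<forall>A\<in>sets (lp_borel p). emeasure m (bshift w -` A \<inter> space m) = emeasure m A) \<and>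
            m \<noteq> return (lp_borel p) (\<lambda>_. 0))
         \<longleftrightarrow> summable (\<lambda>n. 1 / norm (\<Prod>k=1..Suc n. w k) powr p)"
proof -
  have p: "0 < p" using assms(1) by simp
  obtain M where M: "0 < M" "\<forall>x\<in>w ` {1..}. norm x \<le> M" using assms(2) bounded_pos by blast
  hence M': "\<forall>n\<ge>1. norm (w n) \<le> M" by auto
  show ?thesis
  proof
    assume "\<exists>m :: (nat \<Rightarrow> 'a) measure. prob_space m \<and> sets m = sets (lp_borel p) \<and>
            (\<forall>A\<in>sets (lp_borel p). emeasure m (bshift w -` A \<inter> space m) = emeasure m A) \<and>
            m \<noteq> return (lp_borel p) (\<lambda>_. 0)"
    then obtain m :: "(nat \<Rightarrow> 'a) measure" where "prob_space m" "sets m = sets (lp_borel p)"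
      "\<forall>A\<in>sets (lp_borel p). emeasure m (bshift w -` A \<inter> space m) = emeasure m A"
      "m \<noteq> return (lp_borel p) (\<lambda>_. 0)" by blast
    thus "summable (\<lambda>n. 1 / norm (\<Prod>k=1..Suc n. w k) powr p)"
      by (intro forward_dir[OF p M(1) M' assms(3)])
  next
    assume "summable (\<lambda>n. 1 / norm (\<Prod>k=1..Suc n. w k) powr p)"
    thus "\<exists>m :: (nat \<Rightarrow> 'a) measure. prob_space m \<and> sets m = sets (lp_borel p) \<and>
            (\<forall>A\<in>sets (lp_borel p). emeasure m (bshift w -` A \<inter> space m) = emeasure m A) \<and>
            m \<noteq> return (lp_borel p) (\<lambda>_. 0)"
      by (rule backward_dir[OF p M(1) M' assms(3)])
  qed
qed

end
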